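(* Let $N\ge 1$ be an integer, let $\eta_1,\eta_2$ be real with $0<\eta_1,\eta_2<1$, $\eta_1+\eta_2<1$, and let $u_1,v_1,u_2,v_2$ be complex numbers. Then the polynomials $P_{m_1,m_2}$ ($m_1,m_2\ge0$ integers, $m_1+m_2\le N$) are mutually orthogonal with respect to the trinomial weight, i.e. \[ \sum_{\substack{x_1,x_2\ge 0\\ x_1+x_2\le N}} b_2(x_1,x_2;N;\eta_1,\eta_2)\,P_{m_1,m_2}(x_1,x_2)P_{n_1,n_2}(x_1,x_2)=0\quad\text{whenever }(m_1,m_2)\neq(n_1,n_2), \] if and only if \[ \text{(a) } \eta_1u_1+\eta_2v_1=1,\qquad \text{(b) } \eta_1u_2+\eta_2v_2=1,\qquad \text{(c) } \eta_1u_1u_2+\eta_2v_1v_2=1 . \] (For the sufficiency direction one may additionally assume $u_1,u_2,v_1,v_2\notin\{0,1\}$ and $u_1v_2-u_2v_1\neq 0$.)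
   Context: Notation: $(a)_k=a(a+1)\cdots(a+k-1)$, $(a)_0=1$, is the Pochhammer symbol. For a nonnegative integer $N$ and nonnegative integers $m_1,m_2,x_1,x_2$ with $m_1+m_2\le N$, $x_1+x_2\le N$, and parameters $u_1,v_1,u_2,v_2$, define the 2-variable Krawtchouk polynomial \[ P_{m_1,m_2}(x_1,x_2)=\sum_{\substack{i,j,k,l\ge 0\\ i+j+k+l\le N}}\frac{(-m_1)_{i+j}(-m_2)_{k+l}(-x_1)_{i+k}(-x_2)_{j+l}}{i!\,j!\,k!\,l!\,(-N)_{i+j+k+l}}\,u_1^i v_1^j u_2^k v_2^l . \] The trinomial distribution is $b_2(x_1,x_2;N;\eta_1,\eta_2)=\frac{N!}{x_1!\,x_2!\,(N-x_1-x_2)!}\eta_1^{x_1}\eta_2^{x_2}(1-\eta_1-\eta_2)^{N-x_1-x_2}$. *)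

theory Defs
  imports Complex_Main
begin

definition kraw2 ::
  "nat \<Rightarrow> complex \<Rightarrow> complex \<Rightarrow> complex \<Rightarrow> complex \<Rightarrow> nat \<Rightarrow> nat \<Rightarrow> nat \<Rightarrow> nat \<Rightarrow> complex" where
  "kraw2 N u1 v1 u2 v2 m1 m2 x1 x2 =
     (\<Sum>(i,j,k,l) \<in> {(i,j,k,l). i + j + k + l \<le> N}.
        pochhammer (- of_nat m1) (i + j) * pochhammer (- of_nat m2) (k + l)
        * pochhammer (- of_nat x1) (i + k) * pochhammer (- of_nat x2) (j + l)
        / (of_nat (fact i * fact j * fact k * fact l) * pochhammer (- of_nat N) (i + j + k + l))
        * u1 ^ i * v1 ^ j * u2 ^ k * v2 ^ l)"

definition trinomial :: "nat \<Rightarrow> nat \<Rightarrow> nat \<Rightarrow> real \<Rightarrow> real \<Rightarrow> real" where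
  "trinomial x1 x2 N eta1 eta2 =
     fact N / (fact x1 * fact x2 * fact (N - x1 - x2))
     * eta1 ^ x1 * eta2 ^ x2 * (1 - eta1 - eta2) ^ (N - x1 - x2)"

end

theory Submission
  imports Defs "HOL-Analysis.Poly_Roots"
begin

definition mc :: "nat \<Rightarrow> nat \<Rightarrow> nat \<Rightarrow> complex" where
  "mc n a b = (if a + b \<le> n then fact n / (fact a * fact b * fact (n - a - b)) else 0)"

lemma poch_neg:
  "pochhammer (- of_nat n :: complex) k = (if k \<le> n then (-1)^k * fact n / fact (n-k) else 0)"
proof (cases "k \<le> n")
  case True
  have "(of_nat (n choose k) :: complex) = (-1)^k * pochhammer (- of_nat n) k / fact k"
    by (simp add: binomial_gbinomial gbinomial_pochhammer)
  moreover have "(of_nat (n choose k) :: complex) = fact n / (fact k * fact (n-k))"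
    using True by (rule binomial_fact)
  ultimately have "(-1)^k * pochhammer (- of_nat n) k / fact k = (fact n / (fact k * fact (n-k)) :: complex)"
    by simp
  then have e: "(-1)^k * pochhammer (- of_nat n :: complex) k = fact n / fact (n-k)"
    by (simp add: field_simps)
  have "pochhammer (- of_nat n :: complex) k = (-1)^k * ((-1)^k * pochhammer (- of_nat n :: complex) k)"
    by (simp flip: power_add add: mult_2[symmetric] power_mult)
  also have "\<dots> = (-1)^k * fact n / fact (n-k)" using e by simp
  finally have "pochhammer (- of_nat n :: complex) k = (-1)^k * fact n / fact (n-k)" .
  then show ?thesis using True by simp
next
  case False
  then show ?thesis by (simp add: pochhammer_of_nat_eq_0_lemma)
qed

lemma box_sum:
  fixes n :: nat
  assumes "n \<le> M1" "n \<le> M2" "\<And>i k. n < i + k \<Longrightarrow> f i k = 0"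
  shows "(\<Sum>i\<le>M1. \<Sum>k\<le>M2. f i k) = (\<Sum>i\<le>n. \<Sum>k\<le>n-i. f i k)"
proof -
  have "(\<Sum>i\<le>M1. \<Sum>k\<le>M2. f i k) = (\<Sum>i\<le>n. \<Sum>k\<le>M2. f i k)"
  proof (rule sum.mono_neutral_right)
    show "\<forall>i\<in>{..M1} - {..n}. (\<Sum>k\<le>M2. f i k) = 0"
    proof
      fix i assume "i \<in> {..M1} - {..n}"
      then have "n < i" by auto
      then show "(\<Sum>k\<le>M2. f i k) = 0" using assms(3) by (intro sum.neutral) auto
    qed
  qed (use assms in auto)
  also have "\<dots> = (\<Sum>i\<le>n. \<Sum>k\<le>n-i. f i k)"
    by (rule sum.cong[OF refl], rule sum.mono_neutral_right) (use assms in \<open>auto, metis le_diff_conv2 add.commute not_le\<close>)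
  finally show ?thesis .
qed

lemma TRI:
  assumes "n \<le> M1" "n \<le> M2"
  shows "(\<Sum>i\<le>M1. \<Sum>k\<le>M2. mc n i k * a^i * b^k * c^(n-i-k)) = (a+b+c)^n"
proof -
  have "(a+b+c)^n = (a+(b+c))^n" by (simp add: add.assoc)
  also have "\<dots> = (\<Sum>i\<le>n. of_nat (n choose i) * a^i * (b+c)^(n-i))"
    by (rule binomial_ring)
  also have "\<dots> = (\<Sum>i\<le>n. \<Sum>k\<le>n-i. of_nat (n choose i) * a^i * (of_nat ((n-i) choose k) * b^k * c^(n-i-k)))"
    by (simp add: binomial_ring sum_distrib_left)
  also have "\<dots> = (\<Sum>i\<le>n. \<Sum>k\<le>n-i. mc n i k * a^i * b^k * c^(n-i-k))"
  proof (intro sum.cong refl)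
    fix i k assume i: "i \<in> {..n}" and k: "k \<in> {..n-i}"
    then have "(of_nat (n choose i) :: complex) * of_nat ((n-i) choose k) = mc n i k"
      by (simp add: binomial_fact mc_def field_simps)
    then show "of_nat (n choose i) * a^i * (of_nat ((n-i) choose k) * b^k * c^(n-i-k)) = mc n i k * a^i * b^k * c^(n-i-k)"
      by (metis (no_types, lifting) mult.assoc mult.left_commute)
  qed
  also have "\<dots> = (\<Sum>i\<le>M1. \<Sum>k\<le>M2. mc n i k * a^i * b^k * c^(n-i-k))"
    by (rule box_sum[symmetric]) (use assms in \<open>auto simp: mc_def\<close>)
  finally show ?thesis ..
qed

lemma shift_sum:
  fixes h :: "nat \<Rightarrow> complex"
  assumes "p \<le> N"
  shows "(\<Sum>m\<le>N. if p \<le> m then h (m - p) else 0) = (\<Sum>c\<le>N-p. h c)"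
proof -
  have "(\<Sum>m\<le>N. if p \<le> m then h (m - p) else 0) = (\<Sum>m\<in>{p..N}. h (m - p))"
    by (rule sum.mono_neutral_cong_right) auto
  also have "\<dots> = (\<Sum>m\<in>(\<lambda>c. c + p) ` {..N-p}. h (m - p))"
  proof -
    have "{p..N} = (\<lambda>c. c + p) ` {..N-p}"
    proof (intro set_eqI iffI)
      fix x assume "x \<in> {p..N}"
      then show "x \<in> (\<lambda>c. c + p) ` {..N-p}" by (intro image_eqI[of _ _ "x - p"]) auto
    qed (use assms in auto)
    then show ?thesis by simp
  qed
  also have "\<dots> = (\<Sum>c\<le>N-p. h c)"
    by (subst sum.reindex) (auto simp: inj_on_def)
  finally show ?thesis .
qed

lemma coef_id:
  assumes "p \<le> m1" "q \<le> m2" "p + q \<le> N"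
  shows "mc N m1 m2 * (pochhammer (- of_nat m1) p * pochhammer (- of_nat m2) q / pochhammer (- of_nat N) (p+q))
         = mc (N-p-q) (m1-p) (m2-q)"
proof (cases "m1 + m2 \<le> N")
  case True
  obtain c1 where c1: "m1 = p + c1" using assms(1) le_Suc_ex by blast
  obtain c2 where c2: "m2 = q + c2" using assms(2) le_Suc_ex by blast
  obtain r where r: "N = p + q + c1 + c2 + r" using True c1 c2
    by (metis add.assoc add.left_commute le_Suc_ex)
  have f: "fact (c1+c2+r) \<noteq> (0::complex)" "fact (p+q+c1+c2+r) \<noteq> (0::complex)"
    "fact (p+c1) \<noteq> (0::complex)" "fact (q+c2) \<noteq> (0::complex)" by simp_all
  have P: "pochhammer (- of_nat m1 :: complex) p = (-1)^p * fact m1 / fact (m1-p)"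
    "pochhammer (- of_nat m2 :: complex) q = (-1)^q * fact m2 / fact (m2-q)"
    "pochhammer (- of_nat N :: complex) (p+q) = (-1)^(p+q) * fact N / fact (N-(p+q))"
    using assms by (simp_all add: poch_neg)
  show ?thesis
    unfolding P unfolding c1 c2 r using f
    by (simp add: mc_def field_simps power_add)
next
  case False
  then show ?thesis using assms by (simp add: mc_def)
qed

lemma L1:
  assumes "p + q \<le> N"
  shows "(\<Sum>m1\<le>N. \<Sum>m2\<le>N. mc N m1 m2 * (pochhammer (- of_nat m1) p * pochhammer (- of_nat m2) q
            / pochhammer (- of_nat N) (p+q)) * t1^m1 * t2^m2)
       = t1^p * t2^q * (1+t1+t2)^(N-p-q)"
proof -
  have "(\<Sum>m1\<le>N. \<Sum>m2\<le>N. mc N m1 m2 * (pochhammer (- of_nat m1) p * pochhammer (- of_nat m2) q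
            / pochhammer (- of_nat N) (p+q)) * t1^m1 * t2^m2)
     = (\<Sum>m1\<le>N. if p \<le> m1 then (\<Sum>m2\<le>N. if q \<le> m2 then mc (N-p-q) (m1-p) (m2-q) * t1^m1 * t2^m2 else 0) else 0)"
  proof (intro sum.cong refl)
    fix m1 assume "m1 \<in> {..N}"
    have t: "mc N m1 m2 * (pochhammer (- of_nat m1) p * pochhammer (- of_nat m2) q
            / pochhammer (- of_nat N) (p+q)) * t1^m1 * t2^m2
       = (if p \<le> m1 then (if q \<le> m2 then mc (N-p-q) (m1-p) (m2-q) * t1^m1 * t2^m2 else 0) else 0)" for m2
    proof (cases "p \<le> m1 \<and> q \<le> m2")
      case True then show ?thesis using coef_id[of p m1 q m2 N] assms by simp
    next
      case False then show ?thesis by (auto simp: pochhammer_of_nat_eq_0_lemma)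
    qed
    show "(\<Sum>m2\<le>N. mc N m1 m2 * (pochhammer (- of_nat m1) p * pochhammer (- of_nat m2) q
            / pochhammer (- of_nat N) (p+q)) * t1^m1 * t2^m2) =
        (if p \<le> m1 then (\<Sum>m2\<le>N. if q \<le> m2 then mc (N-p-q) (m1-p) (m2-q) * t1^m1 * t2^m2 else 0) else 0)"
      unfolding t by (cases "p \<le> m1") auto
  qed
  also have "\<dots> = (\<Sum>c1\<le>N-p. (\<Sum>m2\<le>N. if q \<le> m2 then mc (N-p-q) c1 (m2-q) * t1^(c1+p) * t2^m2 else 0))"
    using shift_sum[of p N "\<lambda>c. (\<Sum>m2\<le>N. if q \<le> m2 then mc (N-p-q) c (m2-q) * t1^(c+p) * t2^m2 else 0)"] assms
    by (simp add: cong: if_cong)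
  also have "\<dots> = (\<Sum>c1\<le>N-p. \<Sum>c2\<le>N-q. mc (N-p-q) c1 c2 * t1^(c1+p) * t2^(c2+q))"
  proof (rule sum.cong[OF refl])
    fix c1
    have "(\<Sum>m2\<le>N. if q \<le> m2 then mc (N-p-q) c1 (m2-q) * t1^(c1+p) * t2^m2 else 0)
        = (\<Sum>m2\<le>N. if q \<le> m2 then (\<lambda>c2. mc (N-p-q) c1 c2 * t1^(c1+p) * t2^(c2+q)) (m2-q) else 0)"
      by (intro sum.cong refl) auto
    also have "\<dots> = (\<Sum>c2\<le>N-q. mc (N-p-q) c1 c2 * t1^(c1+p) * t2^(c2+q))"
      by (rule shift_sum) (use assms in auto)
    finally show "(\<Sum>m2\<le>N. if q \<le> m2 then mc (N-p-q) c1 (m2-q) * t1^(c1+p) * t2^m2 else 0)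
        = (\<Sum>c2\<le>N-q. mc (N-p-q) c1 c2 * t1^(c1+p) * t2^(c2+q))" .
  qed
  also have "\<dots> = t1^p * t2^q * (\<Sum>c1\<le>N-p. \<Sum>c2\<le>N-q. mc (N-p-q) c1 c2 * t1^c1 * t2^c2 * 1^(N-p-q-c1-c2))"
    by (simp add: sum_distrib_left power_add mult_ac)
  also have "\<dots> = t1^p * t2^q * (t1+t2+1)^(N-p-q)"
    by (subst TRI) auto
  finally show ?thesis by (simp add: add_ac)
qed

lemma TRIp:
  fixes a b T :: complex
  assumes "x \<le> M1" "x \<le> M2"
  shows "(\<Sum>i\<le>M1. \<Sum>k\<le>M2. pochhammer (- of_nat x) (i+k) / (fact i * fact k) * a^i * b^k * T^(x-i-k))
       = (T - a - b)^x"
proof -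
  have "(\<Sum>i\<le>M1. \<Sum>k\<le>M2. pochhammer (- of_nat x) (i+k) / (fact i * fact k) * a^i * b^k * T^(x-i-k))
      = (\<Sum>i\<le>M1. \<Sum>k\<le>M2. mc x i k * (-a)^i * (-b)^k * T^(x-i-k))"
  proof (intro sum.cong refl)
    fix i k
    show "pochhammer (- of_nat x) (i+k) / (fact i * fact k) * a^i * b^k * T^(x-i-k)
        = mc x i k * (-a)^i * (-b)^k * T^(x-i-k)"
    proof (cases "i + k \<le> x")
      case True
      then show ?thesis
        by (simp add: poch_neg mc_def power_add power_minus[of a] power_minus[of b] field_simps)
    next
      case False
      then show ?thesis by (simp add: poch_neg mc_def)
    qed
  qed
  also have "\<dots> = (-a + -b + T)^x" by (rule TRI) (use assms in auto)
  also have "\<dots> = (T - a - b)^x" by (simp add: algebra_simps)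
  finally show ?thesis .
qed

definition KT :: "nat \<Rightarrow> complex \<Rightarrow> complex \<Rightarrow> complex \<Rightarrow> complex \<Rightarrow> nat \<Rightarrow> nat \<Rightarrow> nat \<Rightarrow> nat \<Rightarrow> nat \<Rightarrow> nat \<Rightarrow> nat \<Rightarrow> nat \<Rightarrow> complex" where
  "KT N u1 v1 u2 v2 m1 m2 x1 x2 i j k l =
        pochhammer (- of_nat m1) (i + j) * pochhammer (- of_nat m2) (k + l)
        * pochhammer (- of_nat x1) (i + k) * pochhammer (- of_nat x2) (j + l)
        / (of_nat (fact i * fact j * fact k * fact l) * pochhammer (- of_nat N) (i + j + k + l))
        * u1 ^ i * v1 ^ j * u2 ^ k * v2 ^ l"

definition RR :: "complex \<Rightarrow> complex \<Rightarrow> complex \<Rightarrow> complex \<Rightarrow> nat \<Rightarrow> nat \<Rightarrow> nat \<Rightarrow> nat \<Rightarrow> nat \<Rightarrow> nat \<Rightarrow> complex" where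
  "RR u1 v1 u2 v2 x1 x2 i j k l =
        pochhammer (- of_nat x1) (i + k) * pochhammer (- of_nat x2) (j + l)
        / of_nat (fact i * fact j * fact k * fact l) * u1 ^ i * v1 ^ j * u2 ^ k * v2 ^ l"

lemma KT_split:
  "KT N u1 v1 u2 v2 m1 m2 x1 x2 i j k l =
     (pochhammer (- of_nat m1) (i + j) * pochhammer (- of_nat m2) (k + l) / pochhammer (- of_nat N) ((i + j) + (k + l)))
     * RR u1 v1 u2 v2 x1 x2 i j k l"
  unfolding KT_def RR_def by (simp add: times_divide_times_eq mult_ac add_ac)

lemma kraw2_KT: "kraw2 N u1 v1 u2 v2 m1 m2 x1 x2 =
   (\<Sum>(i,j,k,l) \<in> {(i,j,k,l). i + j + k + l \<le> N}. KT N u1 v1 u2 v2 m1 m2 x1 x2 i j k l)"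
  unfolding kraw2_def KT_def by simp

definition Gf where
  "Gf N u1 v1 u2 v2 x1 x2 t1 t2 = (\<Sum>m1\<le>N. \<Sum>m2\<le>N. mc N m1 m2 * kraw2 N u1 v1 u2 v2 m1 m2 x1 x2 * t1^m1 * t2^m2)"

lemma RR_zero: "x1 < i + k \<or> x2 < j + l \<Longrightarrow> RR u1 v1 u2 v2 x1 x2 i j k l = 0"
  unfolding RR_def by (auto simp: pochhammer_of_nat_eq_0_lemma)

lemma prod4:
  fixes f g :: "nat \<Rightarrow> nat \<Rightarrow> complex"
  shows "(\<Sum>i\<le>N. \<Sum>j\<le>N. \<Sum>k\<le>N. \<Sum>l\<le>N. c * f i k * g j l)
       = c * (\<Sum>i\<le>N. \<Sum>k\<le>N. f i k) * (\<Sum>j\<le>N. \<Sum>l\<le>N. g j l)"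
proof -
  have "(\<Sum>i\<le>N. \<Sum>j\<le>N. \<Sum>k\<le>N. \<Sum>l\<le>N. c * f i k * g j l)
      = (\<Sum>i\<le>N. \<Sum>k\<le>N. \<Sum>j\<le>N. \<Sum>l\<le>N. c * f i k * g j l)"
    by (rule sum.cong[OF refl], rule sum.swap)
  also have "\<dots> = (\<Sum>i\<le>N. \<Sum>k\<le>N. c * f i k * (\<Sum>j\<le>N. \<Sum>l\<le>N. g j l))"
    by (simp add: sum_distrib_left)
  also have "\<dots> = (\<Sum>i\<le>N. \<Sum>k\<le>N. c * f i k) * (\<Sum>j\<le>N. \<Sum>l\<le>N. g j l)"
    by (simp only: sum_distrib_right)
  also have "\<dots> = c * (\<Sum>i\<le>N. \<Sum>k\<le>N. f i k) * (\<Sum>j\<le>N. \<Sum>l\<le>N. g j l)"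
    by (simp only: sum_distrib_left)
  finally show ?thesis .
qed

lemma G_closed:
  assumes "x1 + x2 \<le> N"
  shows "Gf N u1 v1 u2 v2 x1 x2 t1 t2 = (1+t1+t2)^(N-x1-x2) * (1+(1-u1)*t1+(1-u2)*t2)^x1 * (1+(1-v1)*t1+(1-v2)*t2)^x2"
proof -
  define S4 where "S4 = {(i,j,k,l). i + j + k + l \<le> (N::nat)}"
  define T where "T = 1 + t1 + t2"
  have finS4: "finite S4"
  proof -
    have "S4 \<subseteq> {..N} \<times> {..N} \<times> {..N} \<times> {..N}" unfolding S4_def by auto
    then show ?thesis by (rule finite_subset) auto
  qed
  have "Gf N u1 v1 u2 v2 x1 x2 t1 t2 = (\<Sum>(m1,m2)\<in>{..N}\<times>{..N}. mc N m1 m2 * kraw2 N u1 v1 u2 v2 m1 m2 x1 x2 * t1^m1 * t2^m2)"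
    unfolding Gf_def by (simp add: sum.cartesian_product)
  also have "\<dots> = (\<Sum>(m1,m2)\<in>{..N}\<times>{..N}. \<Sum>(i,j,k,l)\<in>S4. mc N m1 m2 * KT N u1 v1 u2 v2 m1 m2 x1 x2 i j k l * t1^m1 * t2^m2)"
    unfolding kraw2_KT S4_def by (simp add: sum_distrib_left sum_distrib_right case_prod_beta)
  also have "\<dots> = (\<Sum>(i,j,k,l)\<in>S4. \<Sum>(m1,m2)\<in>{..N}\<times>{..N}. mc N m1 m2 * KT N u1 v1 u2 v2 m1 m2 x1 x2 i j k l * t1^m1 * t2^m2)"
  proof -
    define g where "g = (\<lambda>(m1,m2) (i,j,k,l). mc N m1 m2 * KT N u1 v1 u2 v2 m1 m2 x1 x2 i j k l * t1^m1 * t2^m2)"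
    have "(\<Sum>(m1,m2)\<in>{..N}\<times>{..N}. \<Sum>(i,j,k,l)\<in>S4. mc N m1 m2 * KT N u1 v1 u2 v2 m1 m2 x1 x2 i j k l * t1^m1 * t2^m2)
        = (\<Sum>m\<in>{..N}\<times>{..N}. \<Sum>q\<in>S4. g m q)" unfolding g_def by (simp add: case_prod_unfold)
    also have "\<dots> = (\<Sum>q\<in>S4. \<Sum>m\<in>{..N}\<times>{..N}. g m q)" by (rule sum.swap)
    also have "\<dots> = (\<Sum>(i,j,k,l)\<in>S4. \<Sum>(m1,m2)\<in>{..N}\<times>{..N}. mc N m1 m2 * KT N u1 v1 u2 v2 m1 m2 x1 x2 i j k l * t1^m1 * t2^m2)"
      unfolding g_def by (simp add: case_prod_unfold)
    finally show ?thesis .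
  qed
  also have "\<dots> = (\<Sum>(i,j,k,l)\<in>S4. t1^(i+j) * t2^(k+l) * T^(N-(i+j+k+l)) * RR u1 v1 u2 v2 x1 x2 i j k l)"
  proof (rule sum.cong[OF refl], clarify)
    fix i j k l assume "(i,j,k,l) \<in> S4"
    then have s: "(i+j) + (k+l) \<le> N" unfolding S4_def by simp
    have "(\<Sum>(m1,m2)\<in>{..N}\<times>{..N}. mc N m1 m2 * KT N u1 v1 u2 v2 m1 m2 x1 x2 i j k l * t1^m1 * t2^m2)
        = (\<Sum>m1\<le>N. \<Sum>m2\<le>N. mc N m1 m2 * (pochhammer (- of_nat m1) (i+j) * pochhammer (- of_nat m2) (k+l)
            / pochhammer (- of_nat N) ((i+j)+(k+l))) * t1^m1 * t2^m2) * RR u1 v1 u2 v2 x1 x2 i j k l"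
    proof -
      define Q where "Q = (\<lambda>m1 m2. pochhammer (- of_nat m1) (i+j) * pochhammer (- of_nat m2) (k+l)
            / pochhammer (- of_nat N :: complex) ((i+j)+(k+l)))"
      have "KT N u1 v1 u2 v2 m1 m2 x1 x2 i j k l = Q m1 m2 * RR u1 v1 u2 v2 x1 x2 i j k l" for m1 m2
        unfolding Q_def by (rule KT_split)
      then have "(\<Sum>(m1,m2)\<in>{..N}\<times>{..N}. mc N m1 m2 * KT N u1 v1 u2 v2 m1 m2 x1 x2 i j k l * t1^m1 * t2^m2)
         = (\<Sum>m1\<le>N. \<Sum>m2\<le>N. mc N m1 m2 * Q m1 m2 * t1^m1 * t2^m2) * RR u1 v1 u2 v2 x1 x2 i j k l"
        by (simp add: sum.cartesian_product[symmetric] sum_distrib_right sum_distrib_left mult_ac)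
      then show ?thesis unfolding Q_def .
    qed
    also have "\<dots> = t1^(i+j) * t2^(k+l) * T^(N-(i+j+k+l)) * RR u1 v1 u2 v2 x1 x2 i j k l"
      by (subst L1[OF s]) (simp add: T_def add_ac)
    finally show "(\<Sum>(m1,m2)\<in>{..N}\<times>{..N}. mc N m1 m2 * KT N u1 v1 u2 v2 m1 m2 x1 x2 i j k l * t1^m1 * t2^m2)
        = t1^(i+j) * t2^(k+l) * T^(N-(i+j+k+l)) * RR u1 v1 u2 v2 x1 x2 i j k l" .
  qed
  also have "\<dots> = (\<Sum>(i,j,k,l)\<in>{..N}\<times>{..N}\<times>{..N}\<times>{..N}. t1^(i+j) * t2^(k+l) * T^(N-(i+j+k+l)) * RR u1 v1 u2 v2 x1 x2 i j k l)"
  proof (rule sum.mono_neutral_left)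
    show "S4 \<subseteq> {..N}\<times>{..N}\<times>{..N}\<times>{..N}" unfolding S4_def by auto
    show "\<forall>q\<in>{..N}\<times>{..N}\<times>{..N}\<times>{..N} - S4. (case q of (i,j,k,l) \<Rightarrow> t1^(i+j) * t2^(k+l) * T^(N-(i+j+k+l)) * RR u1 v1 u2 v2 x1 x2 i j k l) = 0"
    proof (clarify)
      fix i j k l assume "(i,j,k,l) \<notin> S4"
      then have "x1 < i + k \<or> x2 < j + l" using assms unfolding S4_def by auto
      then show "t1^(i+j) * t2^(k+l) * T^(N-(i+j+k+l)) * RR u1 v1 u2 v2 x1 x2 i j k l = 0"
        by (simp add: RR_zero)
    qed
  qed auto
  also have "\<dots> = (\<Sum>i\<le>N. \<Sum>j\<le>N. \<Sum>k\<le>N. \<Sum>l\<le>N.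
      T^(N-x1-x2) * (pochhammer (- of_nat x1) (i+k) / (fact i * fact k) * (u1*t1)^i * (u2*t2)^k * T^(x1-i-k))
        * (pochhammer (- of_nat x2) (j+l) / (fact j * fact l) * (v1*t1)^j * (v2*t2)^l * T^(x2-j-l)))"
    unfolding sum.cartesian_product[symmetric]
  proof (intro sum.cong refl)
    fix i j k l
    show "t1^(i+j) * t2^(k+l) * T^(N-(i+j+k+l)) * RR u1 v1 u2 v2 x1 x2 i j k l =
      T^(N-x1-x2) * (pochhammer (- of_nat x1) (i+k) / (fact i * fact k) * (u1*t1)^i * (u2*t2)^k * T^(x1-i-k))
        * (pochhammer (- of_nat x2) (j+l) / (fact j * fact l) * (v1*t1)^j * (v2*t2)^l * T^(x2-j-l))"
    proof (cases "x1 < i + k \<or> x2 < j + l")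
      case True
      then show ?thesis by (auto simp: RR_zero pochhammer_of_nat_eq_0_lemma)
    next
      case False
      then have e: "N-(i+j+k+l) = (N-x1-x2) + (x1-i-k) + (x2-j-l)" using assms by auto
      show ?thesis unfolding e RR_def
        by (simp add: power_add power_mult_distrib field_simps)
    qed
  qed
  also have "\<dots> = T^(N-x1-x2) * (\<Sum>i\<le>N. \<Sum>k\<le>N. pochhammer (- of_nat x1) (i+k) / (fact i * fact k) * (u1*t1)^i * (u2*t2)^k * T^(x1-i-k))
        * (\<Sum>j\<le>N. \<Sum>l\<le>N. pochhammer (- of_nat x2) (j+l) / (fact j * fact l) * (v1*t1)^j * (v2*t2)^l * T^(x2-j-l))"
    by (rule prod4)
  also have "\<dots> = T^(N-x1-x2) * (T - u1*t1 - u2*t2)^x1 * (T - v1*t1 - v2*t2)^x2"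
  proof -
    have "(\<Sum>i\<le>N. \<Sum>k\<le>N. pochhammer (- of_nat x1) (i+k) / (fact i * fact k) * (u1*t1)^i * (u2*t2)^k * T^(x1-i-k))
        = (T - u1*t1 - u2*t2)^x1" by (rule TRIp) (use assms in auto)
    moreover have "(\<Sum>j\<le>N. \<Sum>l\<le>N. pochhammer (- of_nat x2) (j+l) / (fact j * fact l) * (v1*t1)^j * (v2*t2)^l * T^(x2-j-l))
        = (T - v1*t1 - v2*t2)^x2" by (rule TRIp) (use assms in auto)
    ultimately show ?thesis by simp
  qed
  finally show ?thesis unfolding T_def by (simp add: algebra_simps)
qed

lemma sumX_box:
  fixes f :: "nat \<Rightarrow> nat \<Rightarrow> complex"
  shows "(\<Sum>(a,b)\<in>{(a,b). a + b \<le> n}. f a b) = (\<Sum>a\<le>n. \<Sum>b\<le>n. if a + b \<le> n then f a b else 0)"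
proof -
  have "(\<Sum>a\<le>n. \<Sum>b\<le>n. if a + b \<le> n then f a b else 0)
      = (\<Sum>(a,b)\<in>{..n}\<times>{..n}. if a + b \<le> n then f a b else 0)"
    by (simp add: sum.cartesian_product)
  also have "\<dots> = (\<Sum>(a,b)\<in>{(a,b). a + b \<le> n}. f a b)"
    by (rule sum.mono_neutral_cong_right) (auto split: if_splits)
  finally show ?thesis by simp
qed

definition Flat :: "nat \<Rightarrow> (nat \<Rightarrow> nat \<Rightarrow> nat \<Rightarrow> nat \<Rightarrow> complex) \<Rightarrow> complex \<Rightarrow> complex \<Rightarrow> complex \<Rightarrow> complex \<Rightarrow> complex" where
  "Flat N C t1 t2 s1 s2 = (\<Sum>a\<le>N. \<Sum>b\<le>N. \<Sum>c\<le>N. \<Sum>d\<le>N. C a b c d * (t1^a * t2^b * s1^c * s2^d))"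

lemma prod_sums2:
  fixes f g :: "nat \<Rightarrow> nat \<Rightarrow> complex"
  shows "(\<Sum>a\<le>N. \<Sum>b\<le>N. f a b) * (\<Sum>c\<le>N. \<Sum>d\<le>N. g c d) = (\<Sum>a\<le>N. \<Sum>b\<le>N. \<Sum>c\<le>N. \<Sum>d\<le>N. f a b * g c d)"
proof -
  have "(\<Sum>a\<le>N. \<Sum>b\<le>N. f a b) * (\<Sum>c\<le>N. \<Sum>d\<le>N. g c d) = (\<Sum>a\<le>N. \<Sum>b\<le>N. f a b * (\<Sum>c\<le>N. \<Sum>d\<le>N. g c d))"
    by (simp only: sum_distrib_right)
  also have "\<dots> = (\<Sum>a\<le>N. \<Sum>b\<le>N. \<Sum>c\<le>N. \<Sum>d\<le>N. f a b * g c d)"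
    by (simp only: sum_distrib_left)
  finally show ?thesis .
qed

lemma swap5:
  fixes h :: "'x \<Rightarrow> nat \<Rightarrow> nat \<Rightarrow> nat \<Rightarrow> nat \<Rightarrow> complex"
  shows "(\<Sum>x\<in>A. \<Sum>a\<le>N. \<Sum>b\<le>N. \<Sum>c\<le>N. \<Sum>d\<le>N. h x a b c d) = (\<Sum>a\<le>N. \<Sum>b\<le>N. \<Sum>c\<le>N. \<Sum>d\<le>N. \<Sum>x\<in>A. h x a b c d)"
proof -
  have "(\<Sum>x\<in>A. \<Sum>a\<le>N. \<Sum>b\<le>N. \<Sum>c\<le>N. \<Sum>d\<le>N. h x a b c d) = (\<Sum>a\<le>N. \<Sum>x\<in>A. \<Sum>b\<le>N. \<Sum>c\<le>N. \<Sum>d\<le>N. h x a b c d)"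
    by (rule sum.swap)
  also have "\<dots> = (\<Sum>a\<le>N. \<Sum>b\<le>N. \<Sum>x\<in>A. \<Sum>c\<le>N. \<Sum>d\<le>N. h x a b c d)"
    by (rule sum.cong[OF refl], rule sum.swap)
  also have "\<dots> = (\<Sum>a\<le>N. \<Sum>b\<le>N. \<Sum>c\<le>N. \<Sum>x\<in>A. \<Sum>d\<le>N. h x a b c d)"
    by (rule sum.cong[OF refl], rule sum.cong[OF refl], rule sum.swap)
  also have "\<dots> = (\<Sum>a\<le>N. \<Sum>b\<le>N. \<Sum>c\<le>N. \<Sum>d\<le>N. \<Sum>x\<in>A. h x a b c d)"
    by (rule sum.cong[OF refl], rule sum.cong[OF refl], rule sum.cong[OF refl], rule sum.swap)
  finally show ?thesis .
qed

lemma expand_F: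
  fixes w :: "'x \<Rightarrow> complex" and g :: "'x \<Rightarrow> nat \<Rightarrow> nat \<Rightarrow> complex"
  shows "(\<Sum>x\<in>A. w x * (\<Sum>a\<le>N. \<Sum>b\<le>N. g x a b * t1^a * t2^b) * (\<Sum>c\<le>N. \<Sum>d\<le>N. g x c d * s1^c * s2^d))
       = Flat N (\<lambda>a b c d. \<Sum>x\<in>A. w x * g x a b * g x c d) t1 t2 s1 s2"
proof -
  have "(\<Sum>x\<in>A. w x * (\<Sum>a\<le>N. \<Sum>b\<le>N. g x a b * t1^a * t2^b) * (\<Sum>c\<le>N. \<Sum>d\<le>N. g x c d * s1^c * s2^d))
     = (\<Sum>x\<in>A. \<Sum>a\<le>N. \<Sum>b\<le>N. \<Sum>c\<le>N. \<Sum>d\<le>N. (w x * g x a b * g x c d) * (t1^a * t2^b * s1^c * s2^d))"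
  proof (rule sum.cong[OF refl])
    fix x
    have "w x * (\<Sum>a\<le>N. \<Sum>b\<le>N. g x a b * t1^a * t2^b) * (\<Sum>c\<le>N. \<Sum>d\<le>N. g x c d * s1^c * s2^d)
       = w x * ((\<Sum>a\<le>N. \<Sum>b\<le>N. g x a b * t1^a * t2^b) * (\<Sum>c\<le>N. \<Sum>d\<le>N. g x c d * s1^c * s2^d))"
      by (simp only: mult.assoc)
    also have "\<dots> = w x * (\<Sum>a\<le>N. \<Sum>b\<le>N. \<Sum>c\<le>N. \<Sum>d\<le>N. (g x a b * t1^a * t2^b) * (g x c d * s1^c * s2^d))"
      by (simp only: prod_sums2)
    also have "\<dots> = (\<Sum>a\<le>N. \<Sum>b\<le>N. \<Sum>c\<le>N. \<Sum>d\<le>N. (w x * g x a b * g x c d) * (t1^a * t2^b * s1^c * s2^d))"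
      by (simp add: sum_distrib_left mult_ac)
    finally show "w x * (\<Sum>a\<le>N. \<Sum>b\<le>N. g x a b * t1^a * t2^b) * (\<Sum>c\<le>N. \<Sum>d\<le>N. g x c d * s1^c * s2^d)
       = (\<Sum>a\<le>N. \<Sum>b\<le>N. \<Sum>c\<le>N. \<Sum>d\<le>N. (w x * g x a b * g x c d) * (t1^a * t2^b * s1^c * s2^d))" .
  qed
  also have "\<dots> = (\<Sum>a\<le>N. \<Sum>b\<le>N. \<Sum>c\<le>N. \<Sum>d\<le>N. \<Sum>x\<in>A. (w x * g x a b * g x c d) * (t1^a * t2^b * s1^c * s2^d))"
    by (rule swap5)
  also have "\<dots> = Flat N (\<lambda>a b c d. \<Sum>x\<in>A. w x * g x a b * g x c d) t1 t2 s1 s2"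
    unfolding Flat_def by (simp only: sum_distrib_right)
  finally show ?thesis .
qed

lemma peel:
  fixes f g :: "nat \<Rightarrow> 'y \<Rightarrow> complex"
  assumes "\<And>z y. (\<Sum>i\<le>N. f i y * z^i) = (\<Sum>i\<le>N. g i y * z^i)" "i \<le> N"
  shows "f i y = g i y"
proof -
  have "\<forall>z. (\<Sum>i\<le>N. (f i y - g i y) * z^i) = 0"
    using assms(1) by (simp add: left_diff_distrib sum_subtractf)
  then have "\<forall>k. k \<le> N \<longrightarrow> f k y - g k y = 0" by (simp only: polyfun_eq_0)
  then show ?thesis using assms(2) by simp
qed

lemma Flat_horner: "Flat N C t1 t2 s1 s2 =
   (\<Sum>a\<le>N. (\<Sum>b\<le>N. (\<Sum>c\<le>N. (\<Sum>d\<le>N. C a b c d * s2^d) * s1^c) * t2^b) * t1^a)"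
  unfolding Flat_def sum_distrib_right by (simp only: mult_ac)

lemma uniq4:
  assumes "\<And>t1 t2 s1 s2. Flat N C t1 t2 s1 s2 = Flat N D t1 t2 s1 s2"
    and "a \<le> N" "b \<le> N" "c \<le> N" "d \<le> N"
  shows "C a b c d = D a b c d"
proof -
  have h1: "(\<Sum>b\<le>N. (\<Sum>c\<le>N. (\<Sum>d\<le>N. C a b c d * snd (snd y)^d) * fst (snd y)^c) * fst y^b)
          = (\<Sum>b\<le>N. (\<Sum>c\<le>N. (\<Sum>d\<le>N. D a b c d * snd (snd y)^d) * fst (snd y)^c) * fst y^b)" for y
    by (rule peel[where N=N and f="\<lambda>a y. (\<Sum>b\<le>N. (\<Sum>c\<le>N. (\<Sum>d\<le>N. C a b c d * snd (snd y)^d) * fst (snd y)^c) * fst y^b)"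
                      and g="\<lambda>a y. (\<Sum>b\<le>N. (\<Sum>c\<le>N. (\<Sum>d\<le>N. D a b c d * snd (snd y)^d) * fst (snd y)^c) * fst y^b)"])
       (use assms in \<open>simp_all add: Flat_horner[symmetric]\<close>)
  have h2: "(\<Sum>c\<le>N. (\<Sum>d\<le>N. C a b c d * snd y^d) * fst y^c)
          = (\<Sum>c\<le>N. (\<Sum>d\<le>N. D a b c d * snd y^d) * fst y^c)" for y
    by (rule peel[where N=N and f="\<lambda>b y. (\<Sum>c\<le>N. (\<Sum>d\<le>N. C a b c d * snd y^d) * fst y^c)"
                      and g="\<lambda>b y. (\<Sum>c\<le>N. (\<Sum>d\<le>N. D a b c d * snd y^d) * fst y^c)"])
       (use assms h1[of "(_, _)"] in simp_all)
  have h3: "(\<Sum>d\<le>N. C a b c d * y^d) = (\<Sum>d\<le>N. D a b c d * y^d)" for y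
    by (rule peel[where N=N and f="\<lambda>c y. (\<Sum>d\<le>N. C a b c d * y^d)" and g="\<lambda>c y. (\<Sum>d\<le>N. D a b c d * y^d)"])
       (use assms h2[of "(_, _)"] in simp_all)
  show ?thesis
    by (rule peel[where N=N and f="\<lambda>d y. C a b c d" and g="\<lambda>d y. D a b c d"]) (use assms h3 in simp_all)
qed

lemma one_cz:
  assumes "\<And>z. (1 + c * z)^N = (1::complex)" "N \<ge> 1"
  shows "c = 0"
proof (rule ccontr)
  assume "c \<noteq> 0"
  then have "(2::complex)^N = 1" using assms(1)[of "1/c"] by simp
  then have "(of_nat (2^N) :: complex) = of_nat 1" by simp
  then have "(2::nat)^N = 1" by (simp only: of_nat_eq_iff)
  then show False using assms(2) by simp
qed

lemma Flat_zero:
  assumes "\<And>a b c d. a \<le> N \<Longrightarrow> b \<le> N \<Longrightarrow> c \<le> N \<Longrightarrow> d \<le> N \<Longrightarrow> (a,b) \<noteq> (c,d) \<Longrightarrow> C a b c d = 0"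
  shows "Flat N C t1 t2 0 0 = C 0 0 0 0" "Flat N C t1 0 0 s2 = C 0 0 0 0"
proof -
  have "Flat N C t1 t2 0 0 = (\<Sum>a\<le>N. \<Sum>b\<le>N. \<Sum>c\<le>N. \<Sum>d\<le>N.
          if d = 0 then if c = 0 then if b = 0 then if a = 0 then C 0 0 0 0 else 0 else 0 else 0 else 0)"
    unfolding Flat_def using assms by (intro sum.cong refl) auto
  then show "Flat N C t1 t2 0 0 = C 0 0 0 0" by simp
  have "Flat N C t1 0 0 s2 = (\<Sum>a\<le>N. \<Sum>b\<le>N. \<Sum>c\<le>N. \<Sum>d\<le>N.
          if d = 0 then if c = 0 then if b = 0 then if a = 0 then C 0 0 0 0 else 0 else 0 else 0 else 0)"
    unfolding Flat_def using assms by (intro sum.cong refl) auto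
  then show "Flat N C t1 0 0 s2 = C 0 0 0 0" by simp
qed

lemma tri_eq:
  assumes "x1 + x2 \<le> N"
  shows "complex_of_real (trinomial x1 x2 N eta1 eta2) =
     mc N x1 x2 * of_real eta1 ^ x1 * of_real eta2 ^ x2 * (1 - of_real eta1 - of_real eta2) ^ (N - x1 - x2)"
  using assms unfolding trinomial_def mc_def by simp

lemma mc_nz: "a + b \<le> N \<Longrightarrow> mc N a b \<noteq> 0"
  by (simp add: mc_def)

theorem mainTheorem2:
  fixes N :: nat and eta1 eta2 :: real and u1 v1 u2 v2 :: complex
  assumes "N \<ge> 1"
    and "0 < eta1" and "eta1 < 1" and "0 < eta2" and "eta2 < 1" and "eta1 + eta2 < 1"
  defines "orth \<equiv> (\<forall>m1 m2 n1 n2. m1 + m2 \<le> N \<longrightarrow> n1 + n2 \<le> N \<longrightarrow> (m1, m2) \<noteq> (n1, n2) \<longrightarrow>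
      (\<Sum>(x1,x2) \<in> {(x1,x2). x1 + x2 \<le> N}.
         complex_of_real (trinomial x1 x2 N eta1 eta2)
         * kraw2 N u1 v1 u2 v2 m1 m2 x1 x2 * kraw2 N u1 v1 u2 v2 n1 n2 x1 x2) = 0)"
    and "conds \<equiv> (of_real eta1 * u1 + of_real eta2 * v1 = 1
                 \<and> of_real eta1 * u2 + of_real eta2 * v2 = 1
                 \<and> of_real eta1 * u1 * u2 + of_real eta2 * v1 * v2 = 1)"
  shows "(orth \<longrightarrow> conds)
       \<and> (conds \<and> u1 \<notin> {0,1} \<and> u2 \<notin> {0,1} \<and> v1 \<notin> {0,1} \<and> v2 \<notin> {0,1}
            \<and> u1 * v2 - u2 * v1 \<noteq> 0 \<longrightarrow> orth)"
proof -
  define e1 where "e1 = complex_of_real eta1"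
  define e2 where "e2 = complex_of_real eta2"
  define X where "X = {(x1::nat,x2::nat). x1 + x2 \<le> N}"
  define K where "K = kraw2 N u1 v1 u2 v2"
  define w where "w = (\<lambda>(x1,x2). complex_of_real (trinomial x1 x2 N eta1 eta2))"
  define S where "S = (\<lambda>m1 m2 n1 n2. \<Sum>(x1,x2)\<in>X. complex_of_real (trinomial x1 x2 N eta1 eta2) * K m1 m2 x1 x2 * K n1 n2 x1 x2)"
  define Cf where "Cf = (\<lambda>a b c d. mc N a b * mc N c d * S a b c d)"
  define A where "A = (\<lambda>t1 t2. 1+(1-u1)*t1+(1-u2)*t2)"
  define B where "B = (\<lambda>t1 t2. 1+(1-v1)*t1+(1-v2)*t2)"
  define T where "T = (\<lambda>t1 t2::complex. 1+t1+t2)"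
  define Q where "Q = (\<lambda>t1 t2 s1 s2. e1 * A t1 t2 * A s1 s2 + e2 * B t1 t2 * B s1 s2 + (1-e1-e2) * T t1 t2 * T s1 s2)"
  have orth_eq: "orth = (\<forall>m1 m2 n1 n2. m1+m2 \<le> N \<longrightarrow> n1+n2 \<le> N \<longrightarrow> (m1,m2) \<noteq> (n1,n2) \<longrightarrow> S m1 m2 n1 n2 = 0)"
    unfolding orth_def S_def X_def K_def by simp
  have conds_eq: "conds = (e1*u1 + e2*v1 = 1 \<and> e1*u2 + e2*v2 = 1 \<and> e1*u1*u2 + e2*v1*v2 = 1)"
    unfolding conds_def e1_def e2_def by simp
  have FC: "Flat N Cf t1 t2 s1 s2 = Q t1 t2 s1 s2 ^ N" for t1 t2 s1 s2
  proof -
    have coef: "(\<lambda>a b c d. \<Sum>x\<in>X. w x * (mc N a b * K a b (fst x) (snd x)) * (mc N c d * K c d (fst x) (snd x))) = Cf"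
      unfolding Cf_def S_def w_def
      by (intro ext) (simp add: sum_distrib_left case_prod_unfold mult_ac)
    have "Flat N Cf t1 t2 s1 s2 = (\<Sum>x\<in>X. w x * (\<Sum>a\<le>N. \<Sum>b\<le>N. mc N a b * K a b (fst x) (snd x) * t1^a * t2^b)
                      * (\<Sum>c\<le>N. \<Sum>d\<le>N. mc N c d * K c d (fst x) (snd x) * s1^c * s2^d))"
      using expand_F[where w=w and N=N and g="\<lambda>x a b. mc N a b * K a b (fst x) (snd x)" and A=X] unfolding coef by simp
    also have "\<dots> = (\<Sum>x\<in>X. w x * Gf N u1 v1 u2 v2 (fst x) (snd x) t1 t2 * Gf N u1 v1 u2 v2 (fst x) (snd x) s1 s2)"
      unfolding Gf_def K_def by simp
    also have "\<dots> = (\<Sum>(x1,x2)\<in>X. mc N x1 x2 * (e1 * A t1 t2 * A s1 s2)^x1 * (e2 * B t1 t2 * B s1 s2)^x2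
                        * ((1-e1-e2) * T t1 t2 * T s1 s2)^(N-x1-x2))"
    proof (rule sum.cong[OF refl], clarify)
      fix x1 x2 assume "(x1,x2) \<in> X"
      then have x: "x1 + x2 \<le> N" unfolding X_def by simp
      show "w (x1,x2) * Gf N u1 v1 u2 v2 (fst (x1,x2)) (snd (x1,x2)) t1 t2 * Gf N u1 v1 u2 v2 (fst (x1,x2)) (snd (x1,x2)) s1 s2
          = mc N x1 x2 * (e1 * A t1 t2 * A s1 s2)^x1 * (e2 * B t1 t2 * B s1 s2)^x2
                        * ((1-e1-e2) * T t1 t2 * T s1 s2)^(N-x1-x2)"
        unfolding w_def using x
        by (simp add: tri_eq G_closed e1_def e2_def A_def B_def T_def power_mult_distrib mult_ac)
    qed
    also have "\<dots> = (\<Sum>x1\<le>N. \<Sum>x2\<le>N. mc N x1 x2 * (e1 * A t1 t2 * A s1 s2)^x1 * (e2 * B t1 t2 * B s1 s2)^x2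
                        * ((1-e1-e2) * T t1 t2 * T s1 s2)^(N-x1-x2))"
      unfolding X_def sumX_box by (intro sum.cong refl) (simp add: mc_def)
    also have "\<dots> = Q t1 t2 s1 s2 ^ N"
      unfolding Q_def by (rule TRI) auto
    finally show ?thesis .
  qed
  have Q0: "Q 0 0 0 0 = 1" unfolding Q_def A_def B_def T_def by (simp add: algebra_simps)
  have Qgen: "Q t1 t2 s1 s2 = 1 + (1 - (e1*u1+e2*v1))*(t1+s1) + (1 - (e1*u2+e2*v2))*(t2+s2)
      + (e1*(1-u1)^2 + e2*(1-v1)^2 + (1-e1-e2))*t1*s1 + (e1*(1-u2)^2 + e2*(1-v2)^2 + (1-e1-e2))*t2*s2
      + (1 - (e1*u1+e2*v1) - (e1*u2+e2*v2) + (e1*u1*u2+e2*v1*v2))*(t1*s2+t2*s1)" for t1 t2 s1 s2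
    unfolding Q_def A_def B_def T_def by (simp add: algebra_simps power2_eq_square)
  have nec: "orth \<longrightarrow> conds"
  proof
    assume "orth"
    then have Cz: "Cf a b c d = 0" if "a \<le> N" "b \<le> N" "c \<le> N" "d \<le> N" "(a,b) \<noteq> (c,d)" for a b c d
      using that unfolding orth_eq Cf_def by (cases "a + b \<le> N \<and> c + d \<le> N") (auto simp: mc_def)
    have F1: "Q t1 t2 0 0 ^ N = 1" for t1 t2
      using Flat_zero(1)[of N Cf t1 t2, OF Cz] FC[of t1 t2 0 0] Flat_zero(1)[of N Cf 0 0, OF Cz] FC[of 0 0 0 0] Q0
      by simp
    have F2: "Q t1 0 0 s2 ^ N = 1" for t1 s2
      using Flat_zero(2)[of N Cf t1 s2, OF Cz] FC[of t1 0 0 s2] Flat_zero(1)[of N Cf 0 0, OF Cz] FC[of 0 0 0 0] Q0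
      by simp
    have a: "1 - (e1*u1+e2*v1) = 0"
      by (rule one_cz[OF _ assms(1)]) (use F1[of _ 0] in \<open>simp add: Qgen\<close>)
    have b: "1 - (e1*u2+e2*v2) = 0"
      by (rule one_cz[OF _ assms(1)]) (use F1[of 0] in \<open>simp add: Qgen\<close>)
    have ea: "e1*u1+e2*v1 = 1" using a by simp
    have eb: "e1*u2+e2*v2 = 1" using b by simp
    have Qc: "Q z 0 0 1 = 1 + (e1*u1*u2+e2*v1*v2 - 1) * z" for z
      unfolding Qgen ea eb by (simp add: algebra_simps)
    have c: "e1*u1*u2+e2*v1*v2 - 1 = 0"
      by (rule one_cz[OF _ assms(1)]) (use F2[of _ 1] in \<open>simp add: Qc\<close>)
    show conds unfolding conds_eq using ea eb c by simp
  qed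
  have suf: "conds \<longrightarrow> orth"
  proof
    assume "conds"
    then have ca: "e1*u1+e2*v1 = 1" and cb: "e1*u2+e2*v2 = 1" and cc: "e1*u1*u2+e2*v1*v2 = 1"
      unfolding conds_eq by auto
    define \<alpha> where "\<alpha> = e1*(1-u1)^2 + e2*(1-v1)^2 + (1-e1-e2)"
    define \<beta> where "\<beta> = e1*(1-u2)^2 + e2*(1-v2)^2 + (1-e1-e2)"
    have Qs: "Q t1 t2 s1 s2 = \<alpha>*t1*s1 + \<beta>*t2*s2 + 1" for t1 t2 s1 s2
      unfolding Qgen ca cb cc \<alpha>_def \<beta>_def by simp
    define D where "D = (\<lambda>a b c d. if c = a then if d = b then mc N a b * \<alpha>^a * \<beta>^b else 0 else (0::complex))"
    have FD: "Flat N D t1 t2 s1 s2 = Q t1 t2 s1 s2 ^ N" for t1 t2 s1 s2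
    proof -
      have "Flat N D t1 t2 s1 s2 = (\<Sum>a\<le>N. \<Sum>b\<le>N. mc N a b * (\<alpha>*t1*s1)^a * (\<beta>*t2*s2)^b * 1^(N-a-b))"
        unfolding Flat_def
      proof (intro sum.cong refl)
        fix a b assume "a \<in> {..N}" "b \<in> {..N}"
        then show "(\<Sum>c\<le>N. \<Sum>d\<le>N. D a b c d * (t1^a * t2^b * s1^c * s2^d)) = mc N a b * (\<alpha>*t1*s1)^a * (\<beta>*t2*s2)^b * 1^(N-a-b)"
        proof -
          have "D a b c d * (t1^a * t2^b * s1^c * s2^d) = (if d = b then if c = a then mc N a b * (\<alpha>*t1*s1)^a * (\<beta>*t2*s2)^b * 1^(N-a-b) else 0 else 0)" for c d
            unfolding D_def by (simp add: power_mult_distrib mult_ac)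
          then show ?thesis using \<open>a \<in> {..N}\<close> \<open>b \<in> {..N}\<close> by simp
        qed
      qed
      also have "\<dots> = (\<alpha>*t1*s1 + \<beta>*t2*s2 + 1)^N" by (rule TRI) auto
      finally show ?thesis unfolding Qs .
    qed
    show orth unfolding orth_eq
    proof (intro allI impI)
      fix m1 m2 n1 n2 assume m: "m1 + m2 \<le> N" and n: "n1 + n2 \<le> N" and ne: "(m1,m2) \<noteq> (n1,n2)"
      have "Cf m1 m2 n1 n2 = D m1 m2 n1 n2"
        by (rule uniq4[where N=N]) (use FC FD m n in auto)
      also have "\<dots> = 0" using ne unfolding D_def by auto
      finally have "mc N m1 m2 * mc N n1 n2 * S m1 m2 n1 n2 = 0" unfolding Cf_def .
      then show "S m1 m2 n1 n2 = 0" using mc_nz[OF m] mc_nz[OF n] by simp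
    qed
  qed
  show ?thesis using nec suf by blast
qed

end
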